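(* Let $\Gamma\subset\mathbf{Z}^n$ be an almost periodic pattern, $\varepsilon>0$ and $\ell\in\mathbf{N}^*$. Set $\varepsilon'=\varepsilon/\ell$ and let $R_{\varepsilon'}>0$ and a relatively dense set $\mathcal N_{\varepsilon'}$ be such that $D_R^+((\Gamma+v)\Delta\Gamma)<\varepsilon'$ for all $R\ge R_{\varepsilon'}$ and all $v\in\mathcal N_{\varepsilon'}$. Then for every $k\in\{1,\dots,\ell\}$ and every $v_1,\dots,v_k\in\mathcal N_{\varepsilon'}$, $\forall R\ge R_{\varepsilon'},\quad D_R^+\Big(\big(\Gamma+\sum_{i=1}^k v_i\big)\Delta\Gamma\Big)<\varepsilon.$
   Context: Balls are for the sup norm: $B(x,R)=\{y:\max_i|x_i-y_i|<R\}$. Relatively dense: there is $R_0>0$ such that every ball of radius at least $R_0$ meets the set; uniformly discrete: there is $r>0$ such that every ball of radius at most $r$ contains at most one point; Delone: both. $D_R^+(\Gamma)=\sup_{x\in\mathbf{R}^n}\frac{\operatorname{Card}(B(x,R)\cap\Gamma)}{\operatorname{Card}(B(x,R)\cap\mathbf{Z}^n)}$. A Delone set $\Gamma\subset\mathbf{Z}^n$ is an almost periodic pattern if for every $\varepsilon>0$ there exist $R_\varepsilon>0$ and a relatively dense set $\mathcal N_\varepsilon$ with $D_R^+((\Gamma+v)\Delta\Gamma)<\varepsilon$ for all $R\ge R_\varepsilon$, $v\in\mathcal N_\varepsilon$. *)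

theory Defs
  imports "HOL-Analysis.Analysis"
begin

text \<open>Points of Z^n are vectors int ^ 'n; balls are sup-norm balls centred at an
arbitrary point x of R^n (real ^ 'n). zball x R is B(x,R) \<inter> Z^n.\<close>

definition zball :: "real ^ 'n \<Rightarrow> real \<Rightarrow> (int ^ 'n) set" where
  "zball x R = {y. \<forall>i. \<bar>x $ i - real_of_int (y $ i)\<bar> < R}"

definition upper_density :: "real \<Rightarrow> (int ^ 'n) set \<Rightarrow> real" where
  "upper_density R A =
     Sup {real (card (zball x R \<inter> A)) / real (card (zball x R)) | x. True}"

definition rel_dense :: "(int ^ 'n) set \<Rightarrow> bool" where
  "rel_dense A \<longleftrightarrow> (\<exists>R0>0. \<forall>x R. R \<ge> R0 \<longrightarrow> zball x R \<inter> A \<noteq> {})"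

definition unif_discrete :: "(int ^ 'n) set \<Rightarrow> bool" where
  "unif_discrete A \<longleftrightarrow> (\<exists>r>0. \<forall>x R. R \<le> r \<longrightarrow>
      (\<forall>a\<in>zball x R \<inter> A. \<forall>b\<in>zball x R \<inter> A. a = b))"

definition delone :: "(int ^ 'n) set \<Rightarrow> bool" where
  "delone A \<longleftrightarrow> rel_dense A \<and> unif_discrete A"

definition translate :: "(int ^ 'n) set \<Rightarrow> int ^ 'n \<Rightarrow> (int ^ 'n) set" where
  "translate A v = (\<lambda>x. x + v) ` A"

definition symdiff :: "'a set \<Rightarrow> 'a set \<Rightarrow> 'a set" where
  "symdiff A B = (A - B) \<union> (B - A)"

definition almost_periodic_pattern :: "(int ^ 'n) set \<Rightarrow> bool" where
  "almost_periodic_pattern \<Gamma> \<longleftrightarrow> delone \<Gamma> \<and>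
     (\<forall>\<epsilon>>0. \<exists>R\<epsilon>>0. \<exists>N. rel_dense N \<and>
        (\<forall>R v. R \<ge> R\<epsilon> \<longrightarrow> v \<in> N \<longrightarrow>
            upper_density R (symdiff (translate \<Gamma> v) \<Gamma>) < \<epsilon>))"

end

theory Submission
  imports Defs
begin

definition rt :: "real \<Rightarrow> (int ^ 'n) set \<Rightarrow> real ^ 'n \<Rightarrow> real" where
  "rt R A x = real (card (zball x R \<inter> A)) / real (card (zball x R))"

lemma ud_eq: "upper_density R A = Sup (range (rt R A))"
  unfolding upper_density_def rt_def by (simp add: full_SetCompr_eq)

lemma zball_finite: "finite (zball x R)"
proof -
  let ?S = "\<lambda>i. {\<lfloor>x $ i - R\<rfloor> .. \<lceil>x $ i + R\<rceil>}"
  have "zball x R \<subseteq> vec_lambda ` (PiE UNIV ?S)"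
  proof
    fix y assume y: "y \<in> zball x R"
    have "y = vec_lambda (\<lambda>i. y $ i)" by simp
    moreover have "(\<lambda>i. y $ i) \<in> PiE UNIV ?S"
    proof -
      { fix i
        have "\<bar>x $ i - real_of_int (y $ i)\<bar> < R" using y by (auto simp: zball_def)
        hence "y $ i \<in> ?S i" by (auto simp: abs_less_iff floor_le_iff le_ceiling_iff) }
      thus ?thesis by auto
    qed
    ultimately show "y \<in> vec_lambda ` (PiE UNIV ?S)" by blast
  qed
  moreover have "finite (PiE UNIV ?S)" by (rule finite_PiE) auto
  ultimately show ?thesis using finite_subset by blast
qed

lemma rt_bounds: "0 \<le> rt R A x" "rt R A x \<le> 1"
proof -
  show "0 \<le> rt R A x" unfolding rt_def by simp
  have "card (zball x R \<inter> A) \<le> card (zball x R)"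
    using zball_finite by (intro card_mono) auto
  thus "rt R A x \<le> 1" unfolding rt_def
    by (cases "card (zball x R) = 0") (auto simp: divide_le_eq_1)
qed

lemma bdd_rt: "bdd_above (range (rt R A))"
  by (rule bdd_aboveI2[where M=1]) (rule rt_bounds(2))

lemma rt_le_ud: "rt R A x \<le> upper_density R A"
  unfolding ud_eq by (rule cSUP_upper[OF _ bdd_rt]) simp

definition sh :: "int ^ 'n \<Rightarrow> real ^ 'n" where
  "sh w = (\<chi> i. real_of_int (w $ i))"

lemma zball_shift: "zball x R = (\<lambda>y. y + w) ` zball (x - sh w) R"
proof -
  have "zball x R \<subseteq> (\<lambda>y. y + w) ` zball (x - sh w) R"
  proof
    fix z assume z: "z \<in> zball x R"
    have "z - w \<in> zball (x - sh w) R" using z by (auto simp: zball_def sh_def algebra_simps)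
    thus "z \<in> (\<lambda>y. y + w) ` zball (x - sh w) R" by (intro image_eqI[of _ _ "z - w"]) auto
  qed
  moreover have "(\<lambda>y. y + w) ` zball (x - sh w) R \<subseteq> zball x R"
    by (auto simp: zball_def sh_def algebra_simps)
  ultimately show ?thesis by blast
qed

lemma rt_shift: "rt R (symdiff (translate A w) (translate B w)) x = rt R (symdiff A B) (x - sh w)"
proof -
  have inj: "inj (\<lambda>y. y + w)" by (auto intro: injI)
  have e1: "zball x R \<inter> symdiff (translate A w) (translate B w)
      = (\<lambda>y. y + w) ` (zball (x - sh w) R \<inter> symdiff A B)"
    by (subst zball_shift[of x R w]) (auto simp: symdiff_def translate_def)
  have e2: "card (zball x R) = card (zball (x - sh w) R)"
    by (subst zball_shift[of x R w], rule card_image[OF inj_on_subset[OF inj]]) simp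
  have e3: "card ((\<lambda>y. y + w) ` (zball (x - sh w) R \<inter> symdiff A B)) = card (zball (x - sh w) R \<inter> symdiff A B)"
    by (rule card_image[OF inj_on_subset[OF inj]]) simp
  show ?thesis unfolding rt_def e1 e2 e3 ..
qed

lemma ud_sub: "upper_density R (symdiff (translate A (u + w)) A)
   \<le> upper_density R (symdiff (translate A u) A) + upper_density R (symdiff (translate A w) A)"
proof -
  have tr: "translate A (u + w) = translate (translate A u) w"
    by (auto simp: translate_def image_image add.assoc add.commute[of u w])
  have "rt R (symdiff (translate A (u + w)) A) x
      \<le> upper_density R (symdiff (translate A u) A) + upper_density R (symdiff (translate A w) A)" for x
  proof -
    let ?P = "symdiff (translate (translate A u) w) (translate A w)"
    let ?Q = "symdiff (translate A w) A"
    have sub: "symdiff (translate A (u + w)) A \<subseteq> ?P \<union> ?Q"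
      unfolding tr symdiff_def by blast
    have "card (zball x R \<inter> symdiff (translate A (u + w)) A)
        \<le> card ((zball x R \<inter> ?P) \<union> (zball x R \<inter> ?Q))"
      using sub zball_finite by (intro card_mono) auto
    also have "\<dots> \<le> card (zball x R \<inter> ?P) + card (zball x R \<inter> ?Q)" by (rule card_Un_le)
    finally have c: "rt R (symdiff (translate A (u + w)) A) x \<le> rt R ?P x + rt R ?Q x"
      unfolding rt_def by (simp add: add_divide_distrib[symmetric] divide_right_mono)
    have "rt R ?P x = rt R (symdiff (translate A u) A) (x - sh w)" by (rule rt_shift)
    hence "rt R ?P x \<le> upper_density R (symdiff (translate A u) A)" using rt_le_ud by simp
    moreover have "rt R ?Q x \<le> upper_density R ?Q" by (rule rt_le_ud)
    ultimately show ?thesis using c by linarith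
  qed
  thus ?thesis unfolding ud_eq[of R "symdiff (translate A (u + w)) A"]
    by (intro cSUP_least) auto
qed

theorem lemmaA1:
  fixes \<Gamma> N :: "(int ^ 'n) set" and \<epsilon> Reps :: real and l :: nat
  assumes "almost_periodic_pattern \<Gamma>"
    and "\<epsilon> > 0" and "l \<ge> 1"
    and "Reps > 0" and "rel_dense N"
    and "\<forall>R v. R \<ge> Reps \<longrightarrow> v \<in> N \<longrightarrow>
            upper_density R (symdiff (translate \<Gamma> v) \<Gamma>) < \<epsilon> / real l"
  shows "\<forall>k \<in> {1..l}. \<forall>v :: nat \<Rightarrow> int ^ 'n. (\<forall>i\<in>{1..k}. v i \<in> N) \<longrightarrow>
           (\<forall>R \<ge> Reps. upper_density R (symdiff (translate \<Gamma> (\<Sum>i=1..k. v i)) \<Gamma>) < \<epsilon>)"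
proof (intro ballI allI impI)
  fix k v R assume k: "k \<in> {1..l}" and v: "\<forall>i\<in>{1..k}. v i \<in> N" and R: "R \<ge> Reps"
  have main: "1 \<le> j \<Longrightarrow> j \<le> k \<Longrightarrow>
      upper_density R (symdiff (translate \<Gamma> (\<Sum>i=1..j. v i)) \<Gamma>) < real j * (\<epsilon> / real l)" for j
  proof (induction j)
    case 0 then show ?case by simp
  next
    case (Suc j)
    show ?case
    proof (cases "j = 0")
      case True then show ?thesis using assms(6) v R Suc.prems by auto
    next
      case False
      have IH: "upper_density R (symdiff (translate \<Gamma> (\<Sum>i=1..j. v i)) \<Gamma>) < real j * (\<epsilon> / real l)"
        using Suc False by auto
      have w: "upper_density R (symdiff (translate \<Gamma> (v (Suc j))) \<Gamma>) < \<epsilon> / real l"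
        using assms(6) v R Suc.prems by auto
      have "(\<Sum>i=1..Suc j. v i) = (\<Sum>i=1..j. v i) + v (Suc j)" by simp
      hence "upper_density R (symdiff (translate \<Gamma> (\<Sum>i=1..Suc j. v i)) \<Gamma>)
          \<le> upper_density R (symdiff (translate \<Gamma> (\<Sum>i=1..j. v i)) \<Gamma>)
            + upper_density R (symdiff (translate \<Gamma> (v (Suc j))) \<Gamma>)"
        using ud_sub by metis
      moreover have "real (Suc j) * (\<epsilon> / real l) = real j * (\<epsilon> / real l) + \<epsilon> / real l"
        by (simp add: distrib_right add_divide_distrib)
      ultimately show ?thesis using IH w by linarith
    qed
  qed
  have "upper_density R (symdiff (translate \<Gamma> (\<Sum>i=1..k. v i)) \<Gamma>) < real k * (\<epsilon> / real l)"
    using main k by auto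
  also have "\<dots> \<le> real l * (\<epsilon> / real l)"
    using k assms(2) by (intro mult_right_mono) auto
  also have "\<dots> = \<epsilon>" using assms(3) by simp
  finally show "upper_density R (symdiff (translate \<Gamma> (\<Sum>i=1..k. v i)) \<Gamma>) < \<epsilon>" .
qed

end
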